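(* Run the Unbiased Space Saving sketch with $m$ bins on an i.i.d. stream of items drawn from a discrete distribution with probabilities $p_1 \ge p_2 \ge \cdots$. Let $B_i(t)$ denote the count in the $i$-th bin after $t$ rows. If $p_1 < 1/m$, then with probability $1$, $B_i(t) - t/m < (\log t)^2 + 1$ for all sufficiently large $t$.
   Context: Unbiased Space Saving sketch with $m$ bins: maintain $m$ bins, each an (item, count) pair, counts initialized to $0$. For each new row with item $x_{new}$: if $x_{new}$ is the label of a bin, increment its count by $1$; otherwise choose a bin with the smallest count $\hat{N}_{min}$ (uniformly at random among all bins sharing the smallest count), increment its count by $1$, and with probability $1/(\hat{N}_{min}+1)$ replace its label by $x_{new}$. *)

theory Defs
  imports "HOL-Probability.Probability"
begin

text \<open>Unbiased Space Saving sketch with m bins, indexed 0..m-1.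
  A state is a pair (lab, cnt): lab i is the label of bin i (None = no label yet),
  cnt i is its count.\<close>

type_synonym uss_state = "(nat \<Rightarrow> nat option) \<times> (nat \<Rightarrow> nat)"

definition uss_init :: uss_state where
  "uss_init = ((\<lambda>_. None), (\<lambda>_. 0))"

text \<open>The auxiliary randomness u, v (independent,
  uniform on [0,1)) realises the two random choices: u selects uniformly one of the
  k bins sharing the smallest count (the floor(u*k)-th of them in index order), and the
  label is replaced iff v < 1/(Nmin+1), i.e. with probability 1/(Nmin+1).\<close>

definition uss_step :: "nat \<Rightarrow> uss_state \<Rightarrow> nat \<times> real \<times> real \<Rightarrow> uss_state" where
  "uss_step m s r =
    (case s of (lab, cnt) \<Rightarrow> case r of (x, u, v) \<Rightarrow>
      if \<exists>i<m. lab i = Some x then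
        (let i = (LEAST i. i < m \<and> lab i = Some x) in (lab, cnt(i := Suc (cnt i))))
      else
        (let Nmin = Min (cnt ` {..<m});
             T = filter (\<lambda>i. cnt i = Nmin) [0..<m];
             j = T ! nat \<lfloor>u * real (length T)\<rfloor>
         in ((if v < 1 / (real Nmin + 1) then lab(j := Some x) else lab),
             cnt(j := Suc Nmin))))"

primrec uss_run :: "nat \<Rightarrow> (nat \<times> real \<times> real) stream \<Rightarrow> nat \<Rightarrow> uss_state" where
  "uss_run m \<omega> 0 = uss_init"
| "uss_run m \<omega> (Suc t) = uss_step m (uss_run m \<omega> t) (\<omega> !! t)"

definition uss_row_measure :: "nat pmf \<Rightarrow> (nat \<times> real \<times> real) measure" where
  "uss_row_measure P = measure_pmf P \<Otimes>\<^sub>M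
     (uniform_measure lborel {0..<1::real} \<Otimes>\<^sub>M uniform_measure lborel {0..<1::real})"

definition uss_space :: "nat pmf \<Rightarrow> (nat \<times> real \<times> real) stream measure" where
  "uss_space P = stream_space (uss_row_measure P)"

definition uss_bin :: "nat \<Rightarrow> (nat \<times> real \<times> real) stream \<Rightarrow> nat \<Rightarrow> nat \<Rightarrow> nat" where
  "uss_bin m \<omega> i t = snd (uss_run m \<omega> t) i"

end

theory Submission
  imports Defs
begin

lemma prob_unif: "prob_space (uniform_measure lborel {0..<1::real})"
  by (intro prob_space_uniform_measure) auto

lemma row_prob: "prob_space (uss_row_measure P)"
proof -
  interpret U: prob_space "uniform_measure lborel {0..<1::real}" by (rule prob_unif)
  interpret UU: pair_prob_space "uniform_measure lborel {0..<1::real}" "uniform_measure lborel {0..<1::real}" ..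
  interpret Q: prob_space "measure_pmf P" by (rule prob_space_measure_pmf)
  interpret R: pair_prob_space "measure_pmf P" "uniform_measure lborel {0..<1::real} \<Otimes>\<^sub>M uniform_measure lborel {0..<1::real}" ..
  show ?thesis unfolding uss_row_measure_def by (rule R.prob_space_axioms)
qed

lemma L1:
  assumes M: "prob_space M" and f[measurable]: "f \<in> borel_measurable (stream_space M)"
  shows "(\<integral>\<^sup>+\<omega>. f (sdrop n \<omega>) \<partial>stream_space M) = (\<integral>\<^sup>+\<omega>. f \<omega> \<partial>stream_space M)"
proof (induction n)
  case 0 then show ?case by simp
next
  case (Suc n)
  interpret prob_space M by (rule M)
  interpret S: prob_space "stream_space M" by (rule prob_space_stream_space)
  have "(\<integral>\<^sup>+\<omega>. f (sdrop (Suc n) \<omega>) \<partial>stream_space M) = (\<integral>\<^sup>+x. (\<integral>\<^sup>+\<omega>. f (sdrop n \<omega>) \<partial>stream_space M) \<partial>M)"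
    by (subst nn_integral_stream_space) auto
  also have "\<dots> = (\<integral>\<^sup>+\<omega>. f \<omega> \<partial>stream_space M)"
    using Suc by (simp add: emeasure_space_1)
  finally show ?case .
qed

lemma L2:
  assumes M: "prob_space M" and g[measurable]: "\<And>x. g x \<in> borel_measurable (stream_space M)"
    and h[measurable]: "h \<in> measurable M (count_space (UNIV::nat set))"
  shows "j < a \<Longrightarrow> (\<integral>\<^sup>+\<omega>. g (h (\<omega> !! j)) (sdrop a \<omega>) \<partial>stream_space M)
     = (\<integral>\<^sup>+r. (\<integral>\<^sup>+\<omega>. g (h r) \<omega> \<partial>stream_space M) \<partial>M)"
proof (induction j arbitrary: a)
  case 0
  interpret prob_space M by (rule M)
  have meas: "(\<lambda>\<omega>. g (h (\<omega> !! 0)) (sdrop a \<omega>)) \<in> borel_measurable (stream_space M)"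
    by (rule measurable_compose_countable'[where I=UNIV and f="\<lambda>i \<omega>. g i (sdrop a \<omega>)"]) auto
  obtain b where a: "a = Suc b" using 0 by (cases a) auto
  have "(\<integral>\<^sup>+\<omega>. g (h (\<omega> !! 0)) (sdrop a \<omega>) \<partial>stream_space M)
     = (\<integral>\<^sup>+r. (\<integral>\<^sup>+\<omega>. g (h r) (sdrop b \<omega>) \<partial>stream_space M) \<partial>M)"
    by (subst nn_integral_stream_space[OF meas]) (simp add: a)
  also have "\<dots> = (\<integral>\<^sup>+r. (\<integral>\<^sup>+\<omega>. g (h r) \<omega> \<partial>stream_space M) \<partial>M)"
    by (simp add: L1[OF M])
  finally show ?case .
next
  case (Suc j)
  interpret prob_space M by (rule M)
  interpret S: prob_space "stream_space M" by (rule prob_space_stream_space)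
  have meas: "(\<lambda>\<omega>. g (h (\<omega> !! Suc j)) (sdrop a \<omega>)) \<in> borel_measurable (stream_space M)"
    by (rule measurable_compose_countable'[where I=UNIV and f="\<lambda>i \<omega>. g i (sdrop a \<omega>)"]) auto
  obtain b where a: "a = Suc b" using Suc by (cases a) auto
  have "(\<integral>\<^sup>+\<omega>. g (h (\<omega> !! Suc j)) (sdrop a \<omega>) \<partial>stream_space M)
     = (\<integral>\<^sup>+r. (\<integral>\<^sup>+\<omega>. g (h (\<omega> !! j)) (sdrop b \<omega>) \<partial>stream_space M) \<partial>M)"
    by (subst nn_integral_stream_space[OF meas]) (simp add: a)
  also have "\<dots> = (\<integral>\<^sup>+r. (\<integral>\<^sup>+\<omega>. g (h r) \<omega> \<partial>stream_space M) \<partial>M)"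
    using Suc a by (simp add: emeasure_space_1)
  finally show ?case .
qed

definition wc :: "('a \<Rightarrow> nat) \<Rightarrow> 'a stream \<Rightarrow> nat \<Rightarrow> nat \<Rightarrow> nat \<Rightarrow> nat" where
  "wc h \<omega> x a n = (\<Sum>k<n. if h (\<omega> !! (a + k)) = x then 1 else 0)"

lemma wc_sdrop: "wc h \<omega> x a n = wc h (sdrop a \<omega>) x 0 n"
  by (simp add: wc_def sdrop_snth add.commute)

lemma wc_Suc: "wc h (r ## \<omega>) x 0 (Suc n) = (if h r = x then 1 else 0) + wc h \<omega> x 0 n"
  unfolding wc_def by (simp add: sum.lessThan_Suc_shift del: sum.lessThan_Suc)

lemma wc_meas[measurable]:
  assumes [measurable]: "h \<in> measurable M (count_space (UNIV::nat set))"
  shows "(\<lambda>\<omega>. wc h \<omega> x a n) \<in> measurable (stream_space M) (count_space UNIV)"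
  unfolding wc_def by measurable

lemma moment:
  assumes M: "prob_space M" and h[measurable]: "h \<in> measurable M (count_space (UNIV::nat set))"
  shows "(\<integral>\<^sup>+\<omega>. ennreal (exp (l * real (wc h \<omega> x 0 n))) \<partial>stream_space M)
     = (\<integral>\<^sup>+r. ennreal (exp (l * (if h r = x then 1 else 0))) \<partial>M) ^ n"
proof (induction n)
  case 0
  interpret prob_space M by (rule M)
  interpret S: prob_space "stream_space M" by (rule prob_space_stream_space)
  show ?case by (simp add: wc_def S.emeasure_space_1)
next
  case (Suc n)
  interpret prob_space M by (rule M)
  have "(\<integral>\<^sup>+\<omega>. ennreal (exp (l * real (wc h \<omega> x 0 (Suc n)))) \<partial>stream_space M)
     = (\<integral>\<^sup>+r. (\<integral>\<^sup>+\<omega>. ennreal (exp (l * (if h r = x then 1 else 0))) * ennreal (exp (l * real (wc h \<omega> x 0 n))) \<partial>stream_space M) \<partial>M)"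
    by (subst nn_integral_stream_space) (auto simp: wc_Suc distrib_left exp_add ennreal_mult intro!: nn_integral_cong)
  also have "\<dots> = (\<integral>\<^sup>+r. ennreal (exp (l * (if h r = x then 1 else 0))) * (\<integral>\<^sup>+r. ennreal (exp (l * (if h r = x then 1 else 0))) \<partial>M) ^ n \<partial>M)"
    by (subst nn_integral_cmult) (auto simp: Suc)
  also have "\<dots> = (\<integral>\<^sup>+r. ennreal (exp (l * (if h r = x then 1 else 0))) \<partial>M) ^ Suc n"
    by (subst nn_integral_multc) auto
  finally show ?case .
qed

lemma row_fst_integral:
  assumes [measurable]: "f \<in> borel_measurable (count_space UNIV)"
  shows "(\<integral>\<^sup>+r. f (fst r) \<partial>uss_row_measure P) = (\<integral>\<^sup>+x. f x \<partial>measure_pmf P)"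
proof -
  interpret U: prob_space "uniform_measure lborel {0..<1::real}" by (rule prob_unif)
  interpret UU: pair_prob_space "uniform_measure lborel {0..<1::real}" "uniform_measure lborel {0..<1::real}" ..
  interpret Q: prob_space "measure_pmf P" by (rule prob_space_measure_pmf)
  interpret R: pair_sigma_finite "measure_pmf P" "uniform_measure lborel {0..<1::real} \<Otimes>\<^sub>M uniform_measure lborel {0..<1::real}"
    by (intro pair_sigma_finite.intro) (simp_all add: prob_space_imp_sigma_finite prob_space_measure_pmf UU.prob_space_axioms)
  have "(\<integral>\<^sup>+r. f (fst r) \<partial>uss_row_measure P) = (\<integral>\<^sup>+x. (\<integral>\<^sup>+y. f x \<partial>(uniform_measure lborel {0..<1::real} \<Otimes>\<^sub>M uniform_measure lborel {0..<1::real})) \<partial>measure_pmf P)"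
    unfolding uss_row_measure_def using UU.nn_integral_fst[of "\<lambda>r. f (fst r)" "measure_pmf P"] by simp
  also have "\<dots> = (\<integral>\<^sup>+x. f x \<partial>measure_pmf P)"
    by (simp add: UU.emeasure_space_1)
  finally show ?thesis .
qed

lemma q_eq:
  assumes "0 \<le> l"
  shows "(\<integral>\<^sup>+r. ennreal (exp (l * (if fst r = x then 1 else 0))) \<partial>uss_row_measure P)
     = ennreal (1 + (exp l - 1) * pmf P x)"
proof -
  have "(\<integral>\<^sup>+r. ennreal (exp (l * (if fst r = x then 1 else 0))) \<partial>uss_row_measure P)
     = (\<integral>\<^sup>+y. 1 + ennreal (exp l - 1) * indicator {x} y \<partial>measure_pmf P)"
  proof -
    have e1: "0 \<le> exp l - 1" using assms by simp
    have e: "ennreal (exp (l * (if y = x then 1 else 0))) = 1 + ennreal (exp l - 1) * indicator {x} y" for y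
      using ennreal_plus[OF zero_le_one e1]
      using assms by (auto simp: indicator_def ennreal_plus[symmetric] simp del: ennreal_plus)
    show ?thesis by (subst row_fst_integral[where f="\<lambda>y. ennreal (exp (l * (if y = x then 1 else 0)))"]) (auto simp: e)
  qed
  also have "\<dots> = 1 + ennreal (exp l - 1) * ennreal (pmf P x)"
    by (subst nn_integral_add) (auto simp: nn_integral_cmult_indicator emeasure_pmf_single measure_pmf.emeasure_space_1)
  also have "\<dots> = ennreal (1 + (exp l - 1) * pmf P x)"
    using assms by (simp add: ennreal_mult[symmetric] del: ennreal_plus) (subst ennreal_plus, auto simp: pmf_nonneg)
  finally show ?thesis .
qed

lemma fst_meas[measurable]: "fst \<in> measurable (uss_row_measure P) (count_space UNIV)"
  unfolding uss_row_measure_def by measurable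

lemma K:
  assumes l: "0 \<le> l" and lb: "\<And>x. (exp l - 1) * pmf P x \<le> l / real m" and ja: "j < a"
  shows "(\<integral>\<^sup>+\<omega>. ennreal (exp (l * real (wc fst \<omega> (fst (\<omega> !! j)) a n))) \<partial>uss_space P)
     \<le> ennreal (exp (l * real n / real m))"
proof -
  have R: "prob_space (uss_row_measure P)" by (rule row_prob)
  interpret prob_space "uss_row_measure P" by (rule R)
  have "(\<integral>\<^sup>+\<omega>. ennreal (exp (l * real (wc fst \<omega> (fst (\<omega> !! j)) a n))) \<partial>uss_space P)
    = (\<integral>\<^sup>+\<omega>. (\<lambda>x \<omega>'. ennreal (exp (l * real (wc fst \<omega>' x 0 n)))) (fst (\<omega> !! j)) (sdrop a \<omega>) \<partial>uss_space P)"
    by (simp add: wc_sdrop[of _ _ _ a])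
  also have "\<dots> = (\<integral>\<^sup>+r. (\<integral>\<^sup>+\<omega>. ennreal (exp (l * real (wc fst \<omega> (fst r) 0 n))) \<partial>uss_space P) \<partial>uss_row_measure P)"
    unfolding uss_space_def by (rule L2[OF R _ fst_meas ja]) measurable
  also have "\<dots> = (\<integral>\<^sup>+r. ennreal (1 + (exp l - 1) * pmf P (fst r)) ^ n \<partial>uss_row_measure P)"
    unfolding uss_space_def by (simp add: moment[OF R fst_meas] q_eq[OF l])
  also have "\<dots> \<le> (\<integral>\<^sup>+r. ennreal (exp (l * real n / real m)) \<partial>uss_row_measure P)"
  proof (rule nn_integral_mono)
    fix r
    have "1 + (exp l - 1) * pmf P (fst r) \<le> exp (l / real m)"
      using lb[of "fst r"] exp_ge_add_one_self[of "l / real m"] by linarith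
    moreover have "0 \<le> 1 + (exp l - 1) * pmf P (fst r)"
      using l by (simp add: pmf_nonneg)
    ultimately have "(1 + (exp l - 1) * pmf P (fst r)) ^ n \<le> exp (l / real m) ^ n"
      by (rule power_mono)
    also have "\<dots> = exp (l * real n / real m)"
      by (simp add: exp_of_nat_mult[symmetric] mult.commute)
    finally show "ennreal (1 + (exp l - 1) * pmf P (fst r)) ^ n \<le> ennreal (exp (l * real n / real m))"
      using l by (subst ennreal_power) (auto intro!: ennreal_leI simp: pmf_nonneg simp del: ennreal_plus)
  qed
  also have "\<dots> = ennreal (exp (l * real n / real m))"
    by (simp add: emeasure_space_1)
  finally show ?thesis .
qed

lemma summ:
  assumes l: "0 < l"
  shows "summable (\<lambda>t. real t * real t * exp (- l * (ln (real t))\<^sup>2))"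
proof (rule summable_comparison_test_ev[OF _ inverse_power_summable[of 2]])
  show "eventually (\<lambda>t. norm (real t * real t * exp (- l * (ln (real t))\<^sup>2)) \<le> inverse (real t ^ 2)) sequentially"
    using eventually_ge_at_top[of "nat \<lceil>exp (4 / l)\<rceil> + 1"]
  proof eventually_elim
    case (elim t)
    have t1: "exp (4 / l) \<le> real t" using elim by linarith
    have tpos: "0 < real t" using elim by simp
    have "4 / l \<le> ln (real t)" using t1 tpos by (metis ln_exp ln_le_cancel_iff exp_gt_zero)
    then have "4 \<le> l * ln (real t)" using l by (simp add: field_simps)
    moreover have "0 \<le> ln (real t)" using elim by simp
    ultimately have "4 * ln (real t) \<le> l * (ln (real t))\<^sup>2"
      by (simp add: power2_eq_square mult_right_mono mult.assoc[symmetric])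
    then have "exp (- l * (ln (real t))\<^sup>2) \<le> exp (- (4 * ln (real t)))" by simp
    also have "\<dots> = inverse (real t ^ 4)"
      using tpos by (simp add: exp_minus exp_of_nat_mult[of 4, simplified])
    finally have "real t * real t * exp (- l * (ln (real t))\<^sup>2) \<le> real t * real t * inverse (real t ^ 4)"
      using tpos by simp
    also have "\<dots> = inverse (real t ^ 2)" using tpos by (simp add: field_simps power2_eq_square) (simp add: power4_eq_xxxx mult.assoc)
    finally show ?case by simp
  qed
qed simp

lemma wcj_meas[measurable]:
  "(\<lambda>\<omega>. wc fst \<omega> (fst (\<omega> !! j)) a n) \<in> measurable (uss_space P) (count_space UNIV)"
  unfolding uss_space_def
  by (rule measurable_compose_countable'[where f="\<lambda>x \<omega>. wc fst \<omega> x a n" and g="\<lambda>\<omega>. fst (\<omega> !! j)" and I=UNIV]) auto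

lemma prob_main:
  assumes l: "0 < l" and lb: "\<And>x. (exp l - 1) * pmf P x \<le> l / real m"
  shows "AE \<omega> in uss_space P. eventually (\<lambda>t. \<forall>s<t. \<forall>j\<le>s.
     real (wc fst \<omega> (fst (\<omega> !! j)) (Suc s) (t - Suc s)) - real (t - Suc s) / real m < (ln (real t))\<^sup>2) sequentially"
proof -
  define T where "T t s j \<omega> = exp (l * (real (wc fst \<omega> (fst (\<omega> !! j)) (Suc s) (t - Suc s)) - real (t - Suc s) / real m - (ln (real t))\<^sup>2))" for t s j and \<omega> :: "(nat \<times> real \<times> real) stream"
  define A where "A t \<omega> = (\<Sum>s<t. \<Sum>j<Suc s. T t s j \<omega>)" for t \<omega>
  define e where "e t = exp (- l * (ln (real t))\<^sup>2)" for t :: nat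
  have Tmeas[measurable]: "(\<lambda>\<omega>. T t s j \<omega>) \<in> borel_measurable (uss_space P)" for t s j
    unfolding T_def[abs_def] by measurable
  have Ameas[measurable]: "(\<lambda>\<omega>. A t \<omega>) \<in> borel_measurable (uss_space P)" for t
    unfolding A_def[abs_def] T_def[abs_def] by measurable
  have Tnn: "0 \<le> T t s j \<omega>" for t s j \<omega> by (simp add: T_def)
  have Ann: "0 \<le> A t \<omega>" for t \<omega> unfolding A_def by (intro sum_nonneg) (simp add: T_def)
  have intT: "(\<integral>\<^sup>+\<omega>. ennreal (T t s j \<omega>) \<partial>uss_space P) \<le> ennreal (e t)" if "j \<le> s" for t s j
  proof -
    define n where "n = t - Suc s"
    have eq: "T t s j \<omega> = exp (l * real (wc fst \<omega> (fst (\<omega> !! j)) (Suc s) n)) * exp (- (l * real n / real m + l * (ln (real t))\<^sup>2))" for \<omega>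
      unfolding T_def n_def by (simp add: exp_add[symmetric] algebra_simps)
    have "(\<integral>\<^sup>+\<omega>. ennreal (T t s j \<omega>) \<partial>uss_space P)
       = (\<integral>\<^sup>+\<omega>. ennreal (exp (l * real (wc fst \<omega> (fst (\<omega> !! j)) (Suc s) n))) \<partial>uss_space P) * ennreal (exp (- (l * real n / real m + l * (ln (real t))\<^sup>2)))"
      by (subst nn_integral_multc[symmetric]) (auto simp: eq ennreal_mult)
    also have "\<dots> \<le> ennreal (exp (l * real n / real m)) * ennreal (exp (- (l * real n / real m + l * (ln (real t))\<^sup>2)))"
      by (intro mult_right_mono K) (use l lb that in auto)
    also have "\<dots> = ennreal (e t)"
      by (simp add: e_def ennreal_mult[symmetric] exp_add[symmetric])
    finally show ?thesis .
  qed
  have intA: "(\<integral>\<^sup>+\<omega>. ennreal (A t \<omega>) \<partial>uss_space P) \<le> ennreal (real t * real t * e t)" for t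
  proof -
    have "(\<integral>\<^sup>+\<omega>. ennreal (A t \<omega>) \<partial>uss_space P) = (\<integral>\<^sup>+\<omega>. (\<Sum>s<t. \<Sum>j<Suc s. ennreal (T t s j \<omega>)) \<partial>uss_space P)"
      unfolding A_def by (intro nn_integral_cong) (simp add: Tnn sum_nonneg del: sum.lessThan_Suc)
    also have "\<dots> = (\<Sum>s<t. \<Sum>j<Suc s. (\<integral>\<^sup>+\<omega>. ennreal (T t s j \<omega>) \<partial>uss_space P))"
      by (subst nn_integral_sum) (auto simp: nn_integral_sum simp del: sum.lessThan_Suc)
    also have "\<dots> \<le> (\<Sum>s<t. \<Sum>j<Suc s. ennreal (e t))"
      by (intro sum_mono intT) auto
    also have "\<dots> = ennreal (\<Sum>s<t. \<Sum>j<Suc s. e t)"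
      by (subst sum_ennreal; simp add: e_def sum_nonneg del: sum.lessThan_Suc)+
    also have "\<dots> \<le> ennreal (real t * real t * e t)"
    proof (intro ennreal_leI)
      have "(\<Sum>s<t. \<Sum>j<Suc s. e t) = (\<Sum>s<t. real (Suc s) * e t)" by simp
      also have "\<dots> \<le> (\<Sum>s<t. real t * e t)"
        by (intro sum_mono mult_right_mono) (auto simp: e_def)
      also have "\<dots> = real t * real t * e t" by simp
      finally show "(\<Sum>s<t. \<Sum>j<Suc s. e t) \<le> real t * real t * e t" .
    qed
    finally show ?thesis .
  qed
  have sg: "summable (\<lambda>t. real t * real t * e t)" unfolding e_def by (rule summ[OF l])
  have "(\<integral>\<^sup>+\<omega>. (\<Sum>t. ennreal (A t \<omega>)) \<partial>uss_space P) = (\<Sum>t. (\<integral>\<^sup>+\<omega>. ennreal (A t \<omega>) \<partial>uss_space P))"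
    by (rule nn_integral_suminf) auto
  also have "\<dots> \<le> (\<Sum>t. ennreal (real t * real t * e t))"
    by (intro suminf_le intA) auto
  also have "\<dots> = ennreal (\<Sum>t. real t * real t * e t)"
    by (rule suminf_ennreal2[OF _ sg]) (simp add: e_def)
  finally have le: "(\<integral>\<^sup>+\<omega>. (\<Sum>t. ennreal (A t \<omega>)) \<partial>uss_space P) \<le> ennreal (\<Sum>t. real t * real t * e t)" .
  have fin: "(\<integral>\<^sup>+\<omega>. (\<Sum>t. ennreal (A t \<omega>)) \<partial>uss_space P) \<noteq> \<infinity>"
  proof
    assume "(\<integral>\<^sup>+\<omega>. (\<Sum>t. ennreal (A t \<omega>)) \<partial>uss_space P) = \<infinity>"
    with le have "\<infinity> \<le> ennreal (\<Sum>t. real t * real t * e t)" by simp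
    then show False by (simp add: top_unique)
  qed
  have "AE \<omega> in uss_space P. (\<Sum>t. ennreal (A t \<omega>)) \<noteq> \<infinity>"
    by (rule nn_integral_PInf_AE[OF _ fin]) auto
  then show ?thesis
  proof (rule eventually_mono)
    fix \<omega> assume "(\<Sum>t. ennreal (A t \<omega>)) \<noteq> \<infinity>"
    then have "summable (\<lambda>t. A t \<omega>)" by (intro summable_suminf_not_top) (auto simp: Ann)
    then have "(\<lambda>t. A t \<omega>) \<longlonglongrightarrow> 0" by (rule summable_LIMSEQ_zero)
    then have ev: "eventually (\<lambda>t. A t \<omega> < 1) sequentially" by (rule order_tendstoD) simp
    show "eventually (\<lambda>t. \<forall>s<t. \<forall>j\<le>s.
     real (wc fst \<omega> (fst (\<omega> !! j)) (Suc s) (t - Suc s)) - real (t - Suc s) / real m < (ln (real t))\<^sup>2) sequentially"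
      using ev
    proof eventually_elim
      case (elim t)
      show ?case
      proof (intro allI impI)
        fix s j assume st: "s < t" and js: "j \<le> s"
        have "T t s j \<omega> \<le> (\<Sum>j<Suc s. T t s j \<omega>)"
          by (rule member_le_sum) (use js Tnn in auto)
        also have "\<dots> \<le> A t \<omega>" unfolding A_def
          by (rule member_le_sum[where f="\<lambda>s. \<Sum>j<Suc s. T t s j \<omega>"]) (use st Tnn in \<open>auto intro!: sum_nonneg add_nonneg_nonneg\<close>)
        finally have "T t s j \<omega> < 1" using elim by simp
        then have "l * (real (wc fst \<omega> (fst (\<omega> !! j)) (Suc s) (t - Suc s)) - real (t - Suc s) / real m - (ln (real t))\<^sup>2) < 0"
          unfolding T_def by simp
        then show "real (wc fst \<omega> (fst (\<omega> !! j)) (Suc s) (t - Suc s)) - real (t - Suc s) / real m < (ln (real t))\<^sup>2"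
          using l by (simp add: mult_less_0_iff)
      qed
    qed
  qed
qed

lemma nat_floor_lt: "u < 1 \<Longrightarrow> 0 < L \<Longrightarrow> nat \<lfloor>u * real L\<rfloor> < L"
proof -
  assume u: "u < 1" and L: "0 < L"
  have "u * real L < real L" using u L by simp
  then have "\<lfloor>u * real L\<rfloor> < int L" by (simp add: floor_less_iff)
  then show ?thesis using L by linarith
qed

lemma step_cases:
  assumes u: "u < 1" and m: "0 < m"
  shows "\<exists>j<m. snd (uss_step m (lab, cnt) (x, u, v)) = cnt(j := Suc (cnt j))
     \<and> (\<forall>i. i \<noteq> j \<longrightarrow> fst (uss_step m (lab, cnt) (x, u, v)) i = lab i)
     \<and> (fst (uss_step m (lab, cnt) (x, u, v)) j = lab j \<or> fst (uss_step m (lab, cnt) (x, u, v)) j = Some x)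
     \<and> (cnt j = Min (cnt ` {..<m}) \<or> lab j = Some x)"
proof (cases "\<exists>i<m. lab i = Some x")
  case True
  define j where "j = (LEAST i. i < m \<and> lab i = Some x)"
  have j: "j < m \<and> lab j = Some x" unfolding j_def using True by (rule LeastI_ex)
  show ?thesis
    by (rule exI[of _ j]) (use True j in \<open>auto simp: uss_step_def j_def[symmetric] Let_def\<close>)
next
  case False
  define Nmin where "Nmin = Min (cnt ` {..<m})"
  define T where "T = filter (\<lambda>i. cnt i = Nmin) [0..<m]"
  define j where "j = T ! nat \<lfloor>u * real (length T)\<rfloor>"
  have "Nmin \<in> cnt ` {..<m}" unfolding Nmin_def using m by (intro Min_in) auto
  then obtain i0 where "i0 < m" "cnt i0 = Nmin" by auto
  then have "i0 \<in> set T" by (simp add: T_def)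
  then have "0 < length T" by (cases T) auto
  then have "nat \<lfloor>u * real (length T)\<rfloor> < length T" by (rule nat_floor_lt[OF u])
  then have "j \<in> set T" unfolding j_def by (rule nth_mem)
  then have j: "j < m" "cnt j = Nmin" by (auto simp: T_def)
  show ?thesis
    by (rule exI[of _ j]) (use False j in \<open>auto simp: uss_step_def Let_def Nmin_def[symmetric] T_def[symmetric] j_def[symmetric]\<close>)
qed

definition goodu :: "(nat \<times> real \<times> real) stream \<Rightarrow> bool" where
  "goodu \<omega> = (\<forall>k. fst (snd (\<omega> !! k)) < 1)"

lemma run_step:
  assumes "goodu \<omega>" "0 < m"
  shows "\<exists>j<m. snd (uss_run m \<omega> (Suc t)) = (snd (uss_run m \<omega> t))(j := Suc (snd (uss_run m \<omega> t) j))
     \<and> (\<forall>i. i \<noteq> j \<longrightarrow> fst (uss_run m \<omega> (Suc t)) i = fst (uss_run m \<omega> t) i)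
     \<and> (fst (uss_run m \<omega> (Suc t)) j = fst (uss_run m \<omega> t) j \<or> fst (uss_run m \<omega> (Suc t)) j = Some (fst (\<omega> !! t)))
     \<and> (snd (uss_run m \<omega> t) j = Min (snd (uss_run m \<omega> t) ` {..<m}) \<or> fst (uss_run m \<omega> t) j = Some (fst (\<omega> !! t)))"
proof -
  obtain lab cnt where st: "uss_run m \<omega> t = (lab, cnt)" by fastforce
  obtain x u v where r: "\<omega> !! t = (x, u, v)" by (cases "\<omega> !! t") auto
  have u: "u < 1" using assms(1) r unfolding goodu_def by (metis fst_conv snd_conv)
  show ?thesis using step_cases[OF u assms(2), of lab cnt x v] by (simp add: st r)
qed

lemma sum_upd: "j \<in> A \<Longrightarrow> finite A \<Longrightarrow> sum (f(j := Suc (f j))) A = Suc (sum f A)"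
proof -
  assume j: "j \<in> A" and A: "finite A"
  have "sum (f(j := Suc (f j))) A = Suc (f j) + sum (f(j := Suc (f j))) (A - {j})"
    using j A by (simp add: sum.remove)
  also have "sum (f(j := Suc (f j))) (A - {j}) = sum f (A - {j})" by (intro sum.cong) auto
  also have "Suc (f j) + sum f (A - {j}) = Suc (sum f A)" using j A by (simp add: sum.remove)
  finally show ?thesis .
qed

lemma run_sum:
  assumes "goodu \<omega>" "0 < m"
  shows "(\<Sum>i<m. snd (uss_run m \<omega> t) i) = t"
proof (induction t)
  case 0 then show ?case by (simp add: uss_init_def)
next
  case (Suc t)
  obtain j where j: "j < m" "snd (uss_run m \<omega> (Suc t)) = (snd (uss_run m \<omega> t))(j := Suc (snd (uss_run m \<omega> t) j))"
    using run_step[OF assms, of t] by blast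
  have "sum ((snd (uss_run m \<omega> t))(j := Suc (snd (uss_run m \<omega> t) j))) {..<m} = Suc (sum (snd (uss_run m \<omega> t)) {..<m})"
    by (rule sum_upd) (use j in auto)
  then show ?case by (simp only: j(2) Suc)
qed

lemma run_min:
  assumes "goodu \<omega>" "0 < m"
  shows "m * Min (snd (uss_run m \<omega> t) ` {..<m}) \<le> t"
proof -
  have "m * Min (snd (uss_run m \<omega> t) ` {..<m}) = (\<Sum>i<m. Min (snd (uss_run m \<omega> t) ` {..<m}))" by simp
  also have "\<dots> \<le> (\<Sum>i<m. snd (uss_run m \<omega> t) i)" by (intro sum_mono Min_le) auto
  finally show ?thesis using run_sum[OF assms] by simp
qed

lemma run_labels:
  assumes "goodu \<omega>" "0 < m"
  shows "fst (uss_run m \<omega> t) i = None \<or> (\<exists>j<t. fst (uss_run m \<omega> t) i = Some (fst (\<omega> !! j)))"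
proof (induction t)
  case 0 then show ?case by (simp add: uss_init_def)
next
  case (Suc t)
  obtain j where j: "\<forall>i. i \<noteq> j \<longrightarrow> fst (uss_run m \<omega> (Suc t)) i = fst (uss_run m \<omega> t) i"
     "fst (uss_run m \<omega> (Suc t)) j = fst (uss_run m \<omega> t) j \<or> fst (uss_run m \<omega> (Suc t)) j = Some (fst (\<omega> !! t))"
    using run_step[OF assms, of t] by blast
  have "fst (uss_run m \<omega> (Suc t)) i = fst (uss_run m \<omega> t) i \<or> fst (uss_run m \<omega> (Suc t)) i = Some (fst (\<omega> !! t))"
    using j by (cases "i = j") auto
  then show ?case
  proof
    assume e: "fst (uss_run m \<omega> (Suc t)) i = fst (uss_run m \<omega> t) i"
    from Suc.IH show ?case
    proof
      assume "fst (uss_run m \<omega> t) i = None" then show ?case using e by simp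
    next
      assume "\<exists>j<t. fst (uss_run m \<omega> t) i = Some (fst (\<omega> !! j))"
      then obtain j' where "j' < t" "fst (uss_run m \<omega> t) i = Some (fst (\<omega> !! j'))" by blast
      then show ?case using e by (intro disjI2 exI[of _ j']) simp
    qed
  next
    assume "fst (uss_run m \<omega> (Suc t)) i = Some (fst (\<omega> !! t))"
    then show ?case by (intro disjI2 exI[of _ t]) simp
  qed
qed

lemma run_above:
  assumes "goodu \<omega>" "0 < m" "i < m" and above: "r < m * snd (uss_run m \<omega> r) i"
  shows "fst (uss_run m \<omega> (Suc r)) i = fst (uss_run m \<omega> r) i
    \<and> snd (uss_run m \<omega> (Suc r)) i \<le> snd (uss_run m \<omega> r) i + (if fst (uss_run m \<omega> r) i = Some (fst (\<omega> !! r)) then 1 else 0)"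
proof -
  obtain j where j: "j < m" "snd (uss_run m \<omega> (Suc r)) = (snd (uss_run m \<omega> r))(j := Suc (snd (uss_run m \<omega> r) j))"
     "\<forall>i. i \<noteq> j \<longrightarrow> fst (uss_run m \<omega> (Suc r)) i = fst (uss_run m \<omega> r) i"
     "fst (uss_run m \<omega> (Suc r)) j = fst (uss_run m \<omega> r) j \<or> fst (uss_run m \<omega> (Suc r)) j = Some (fst (\<omega> !! r))"
     "snd (uss_run m \<omega> r) j = Min (snd (uss_run m \<omega> r) ` {..<m}) \<or> fst (uss_run m \<omega> r) j = Some (fst (\<omega> !! r))"
    using run_step[OF assms(1,2), of r] by blast
  have "m * Min (snd (uss_run m \<omega> r) ` {..<m}) < m * snd (uss_run m \<omega> r) i"
    using run_min[OF assms(1,2), of r] above by linarith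
  then have lt: "Min (snd (uss_run m \<omega> r) ` {..<m}) < snd (uss_run m \<omega> r) i" by simp
  show ?thesis
  proof (cases "i = j")
    case True
    then have ls: "fst (uss_run m \<omega> r) i = Some (fst (\<omega> !! r))" using j(5) lt by auto
    have L: "fst (uss_run m \<omega> (Suc r)) i = fst (uss_run m \<omega> r) i" using j(4) ls True by auto
    have C: "snd (uss_run m \<omega> (Suc r)) i = Suc (snd (uss_run m \<omega> r) i)" using j(2) True by simp
    show ?thesis using L C ls by simp
  next
    case False
    have L: "fst (uss_run m \<omega> (Suc r)) i = fst (uss_run m \<omega> r) i" using j(3) False by blast
    have C: "snd (uss_run m \<omega> (Suc r)) i = snd (uss_run m \<omega> r) i" using j(2) False by simp
    show ?thesis using L C by simp
  qed
qed

lemma run_window: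
  assumes g: "goodu \<omega>" "0 < m" "i < m"
  shows "(\<forall>r. a \<le> r \<longrightarrow> r < a + n \<longrightarrow> r < m * snd (uss_run m \<omega> r) i) \<Longrightarrow>
    fst (uss_run m \<omega> (a + n)) i = fst (uss_run m \<omega> a) i
    \<and> snd (uss_run m \<omega> (a + n)) i \<le> snd (uss_run m \<omega> a) i + (case fst (uss_run m \<omega> a) i of None \<Rightarrow> 0 | Some x \<Rightarrow> wc fst \<omega> x a n)"
proof (induction n)
  case 0 then show ?case by (cases "fst (uss_run m \<omega> a) i") (auto simp: wc_def)
next
  case (Suc n)
  have IH: "fst (uss_run m \<omega> (a + n)) i = fst (uss_run m \<omega> a) i
    \<and> snd (uss_run m \<omega> (a + n)) i \<le> snd (uss_run m \<omega> a) i + (case fst (uss_run m \<omega> a) i of None \<Rightarrow> 0 | Some x \<Rightarrow> wc fst \<omega> x a n)"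
    using Suc by auto
  have "a + n < m * snd (uss_run m \<omega> (a + n)) i" using Suc.prems by auto
  from run_above[OF g this] have st:
    "fst (uss_run m \<omega> (Suc (a + n))) i = fst (uss_run m \<omega> (a + n)) i"
    "snd (uss_run m \<omega> (Suc (a + n))) i \<le> snd (uss_run m \<omega> (a + n)) i + (if fst (uss_run m \<omega> (a + n)) i = Some (fst (\<omega> !! (a + n))) then 1 else 0)"
    by auto
  have wcS: "wc fst \<omega> x a (Suc n) = wc fst \<omega> x a n + (if fst (\<omega> !! (a + n)) = x then 1 else 0)" for x
    by (simp add: wc_def)
  show ?case
  proof (cases "fst (uss_run m \<omega> a) i")
    case None
    then show ?thesis using IH st by simp
  next
    case (Some x)
    then show ?thesis using IH st by (auto simp: wcS split: if_splits)
  qed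
qed

lemma det:
  assumes g: "goodu \<omega>" "0 < m" "i < m" and c: "0 \<le> c"
    and H: "\<forall>s<t. \<forall>j\<le>s. real (wc fst \<omega> (fst (\<omega> !! j)) (Suc s) (t - Suc s)) - real (t - Suc s) / real m < c"
  shows "real (snd (uss_run m \<omega> t) i) - real t / real m < c + 1"
proof -
  define S where "S = {s. s \<le> t \<and> m * snd (uss_run m \<omega> s) i \<le> s}"
  have fin: "finite S" unfolding S_def by auto
  have "0 \<in> S" by (simp add: S_def uss_init_def)
  then have ne: "S \<noteq> {}" by auto
  define s0 where "s0 = Max S"
  have s0S: "s0 \<in> S" unfolding s0_def using fin ne by (rule Max_in)
  then have s0t: "s0 \<le> t" and s0le: "m * snd (uss_run m \<omega> s0) i \<le> s0" by (auto simp: S_def)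
  have after: "r < m * snd (uss_run m \<omega> r) i" if "s0 < r" "r \<le> t" for r
  proof (rule ccontr)
    assume "\<not> r < m * snd (uss_run m \<omega> r) i"
    then have "r \<in> S" using that by (auto simp: S_def)
    then have "r \<le> s0" unfolding s0_def by (rule Max_ge[OF fin])
    then show False using that by simp
  qed
  have mpos: "0 < real m" using g by simp
  have B0: "real (snd (uss_run m \<omega> s0) i) \<le> real s0 / real m"
    using s0le mpos by (simp add: field_simps) (metis of_nat_le_iff of_nat_mult mult.commute)
  show ?thesis
  proof (cases "s0 = t")
    case True
    then show ?thesis using B0 c by simp
  next
    case False
    then have s0t': "s0 < t" using s0t by simp
    define n where "n = t - Suc s0"
    have tn: "Suc s0 + n = t" using s0t' by (simp add: n_def)
    have win: "fst (uss_run m \<omega> (Suc s0 + n)) i = fst (uss_run m \<omega> (Suc s0)) i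
      \<and> snd (uss_run m \<omega> (Suc s0 + n)) i \<le> snd (uss_run m \<omega> (Suc s0)) i + (case fst (uss_run m \<omega> (Suc s0)) i of None \<Rightarrow> 0 | Some x \<Rightarrow> wc fst \<omega> x (Suc s0) n)"
      by (rule run_window[OF g]) (use after tn in auto)
    obtain j where j: "j < m" "snd (uss_run m \<omega> (Suc s0)) = (snd (uss_run m \<omega> s0))(j := Suc (snd (uss_run m \<omega> s0) j))"
      using run_step[OF g(1,2), of s0] by blast
    have one: "snd (uss_run m \<omega> (Suc s0)) i \<le> snd (uss_run m \<omega> s0) i + 1"
      using j by (cases "i = j") auto
    have tr: "real t = real s0 + 1 + real n" using tn by simp
    have key: "real (snd (uss_run m \<omega> t) i) \<le> real s0 / real m + 1 + real n / real m + c"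
    proof (cases "fst (uss_run m \<omega> (Suc s0)) i")
      case None
      then have "snd (uss_run m \<omega> t) i \<le> snd (uss_run m \<omega> s0) i + 1" using win one tn by (simp del: uss_run.simps)
      then have "real (snd (uss_run m \<omega> t) i) \<le> real (snd (uss_run m \<omega> s0) i) + 1" by linarith
      moreover have "0 \<le> real n / real m" using mpos by simp
      ultimately show ?thesis using B0 c by linarith
    next
      case (Some x)
      obtain j' where j': "j' < Suc s0" "fst (uss_run m \<omega> (Suc s0)) i = Some (fst (\<omega> !! j'))"
        using run_labels[OF g(1,2), of "Suc s0" i] Some by auto
      have x: "x = fst (\<omega> !! j')" using j' Some by simp
      have "snd (uss_run m \<omega> t) i \<le> snd (uss_run m \<omega> s0) i + 1 + wc fst \<omega> (fst (\<omega> !! j')) (Suc s0) n"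
        using win one tn Some x by (simp del: uss_run.simps)
      then have "real (snd (uss_run m \<omega> t) i) \<le> real (snd (uss_run m \<omega> s0) i) + 1 + real (wc fst \<omega> (fst (\<omega> !! j')) (Suc s0) n)"
        by linarith
      moreover have "real (wc fst \<omega> (fst (\<omega> !! j')) (Suc s0) n) - real n / real m < c"
        using H s0t' j' unfolding n_def by auto
      ultimately show ?thesis using B0 by linarith
    qed
    have "real t / real m = real s0 / real m + 1 / real m + real n / real m"
      using tr by (simp add: add_divide_distrib)
    moreover have "0 < 1 / real m" using mpos by simp
    ultimately show ?thesis using key by linarith
  qed
qed

lemma AE_row_u: "AE r in uss_row_measure P. fst (snd r) < 1"
proof -
  interpret U: prob_space "uniform_measure lborel {0..<1::real}" by (rule prob_unif)
  interpret UU: pair_prob_space "uniform_measure lborel {0..<1::real}" "uniform_measure lborel {0..<1::real}" ..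
  interpret Q: prob_space "measure_pmf P" by (rule prob_space_measure_pmf)
  interpret R: pair_sigma_finite "measure_pmf P" "uniform_measure lborel {0..<1::real} \<Otimes>\<^sub>M uniform_measure lborel {0..<1::real}"
    by (intro pair_sigma_finite.intro) (simp_all add: prob_space_imp_sigma_finite prob_space_measure_pmf UU.prob_space_axioms)
  have u: "AE a in uniform_measure lborel {0..<1::real}. a < 1"
    by (subst AE_uniform_measure) auto
  have "AE y in uniform_measure lborel {0..<1::real} \<Otimes>\<^sub>M uniform_measure lborel {0..<1::real}. fst y < 1"
    apply (rule UU.AE_pair_measure)
    subgoal by measurable
    using u by auto
  then show ?thesis unfolding uss_row_measure_def
    by (intro R.AE_pair_measure) auto
qed

lemma AE_goodu: "AE \<omega> in uss_space P. goodu \<omega>"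
proof -
  interpret prob_space "uss_row_measure P" by (rule row_prob)
  have "AE \<omega> in stream_space (uss_row_measure P). stream_all (\<lambda>r. fst (snd r) < 1) \<omega>"
    by (rule AE_stream_all[OF _ AE_row_u]) (unfold uss_row_measure_def, measurable)
  then show ?thesis unfolding uss_space_def goodu_def stream_all_def by simp
qed

lemma l_exists:
  fixes P :: "nat pmf"
  assumes m: "0 < m" and anti: "antimono (pmf P)" and p0: "pmf P 0 < 1 / real m"
  shows "\<exists>l>0. \<forall>x. (exp l - 1) * pmf P x \<le> l / real m"
proof -
  have px: "pmf P x \<le> pmf P 0" for x using anti unfolding antimono_def by (metis le0)
  show ?thesis
  proof (cases "pmf P 0 = 0")
    case True
    then have "pmf P x = 0" for x using px[of x] pmf_nonneg[of P x] by linarith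
    then show ?thesis by (intro exI[of _ 1]) (simp add: m)
  next
    case False
    then have p0pos: "0 < pmf P 0" using pmf_nonneg[of P 0] by linarith
    define l where "l = ln (1 / (real m * pmf P 0))"
    have mp: "real m * pmf P 0 < 1" using p0 m by (simp add: field_simps)
    have mp0: "0 < real m * pmf P 0" using m p0pos by simp
    have l: "0 < l" unfolding l_def using mp mp0 by (simp add: field_simps)
    have el: "exp l = 1 / (real m * pmf P 0)" unfolding l_def using mp0 by simp
    have "1 + (- l) \<le> exp (- l)" by (rule exp_ge_add_one_self)
    then have "(1 - l) * exp l \<le> exp (- l) * exp l" by (intro mult_right_mono) auto
    then have e1: "exp l - 1 \<le> l * exp l" by (simp add: exp_minus field_simps)
    show ?thesis
    proof (intro exI[of _ l] conjI allI l)
      fix x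
      have "(exp l - 1) * pmf P x \<le> (exp l - 1) * pmf P 0"
        using l px[of x] by (intro mult_left_mono) auto
      also have "\<dots> \<le> l * exp l * pmf P 0" using e1 p0pos by (intro mult_right_mono) auto
      also have "\<dots> = l / real m" using mp0 p0pos by (simp add: el field_simps)
      finally show "(exp l - 1) * pmf P x \<le> l / real m" .
    qed
  qed
qed

theorem lemma2:
  fixes m :: nat and P :: "nat pmf"
  assumes "0 < m"
    and "antimono (pmf P)"
    and "pmf P 0 < 1 / real m"
  shows "AE \<omega> in uss_space P. eventually (\<lambda>t. \<forall>i<m.
            real (uss_bin m \<omega> i t) - real t / real m < (ln (real t))\<^sup>2 + 1) sequentially"
proof -
  obtain l where l: "0 < l" "\<And>x. (exp l - 1) * pmf P x \<le> l / real m"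
    using l_exists[OF assms] by blast
  show ?thesis
    using prob_main[OF l] AE_goodu
  proof eventually_elim
    case (elim \<omega>)
    from elim(1) show ?case
    proof eventually_elim
      case (elim t)
      then show ?case
        using det[OF \<open>goodu \<omega>\<close> assms(1) _ _ elim] by (simp add: uss_bin_def)
    qed
  qed
qed

end
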